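(* Let $\mathcal{P}_1,\dots,\mathcal{P}_k$ be finite posets and $\mathbf{T}\in\mathbb{R}^{\mathcal{P}_1\times\cdots\times\mathcal{P}_k}$. If $\mathbf{T}$ has an optimal unconstrained rank-$r$ approximation $\mathbf{T}^{(r)}$, i.e. a minimizer of $\Vert\mathbf{T}-\boldsymbol\theta\Vert_F^2$ over all tensors $\boldsymbol\theta$ of (real CP) rank at most $r$, and $\mathbf{T}^{(r)}\in\mathcal{N}_{\le r}$, then $\mathbf{T}^{(r)}$ is a minimizer of $\Vert\mathbf{T}-\boldsymbol\theta\Vert_F^2$ over $\boldsymbol\theta\in\mathcal{N}_{\le r}$. For matrices ($k=2$), if the best rank-at-most-two approximation $\mathbf{T}^{(2)}$ satisfies $\mathbf{T}^{(2)}\in\mathcal{N}_{<\infty}$, then $\mathbf{T}^{(2)}$ is a minimizer of $\Vert\mathbf{T}-\boldsymbol\theta\Vert_F^2$ over $\boldsymbol\theta\in\mathcal{N}_{\le 2}$.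
   Context: For a finite poset $\mathcal{Q}$, the order cone $\mathcal{C}(\mathcal{Q})$ is the set of $\mathbf{f}\in\mathbb{R}^{\mathcal{Q}}$ with $f_x\ge0$ for all $x$ and $f_x\le f_y$ whenever $x\preceq y$. $\mathcal{N}_{\le r}$ is the set of tensors of the form $\sum_{i=1}^r\otimes_{j=1}^k\mathbf{v}^{(ij)}$ with $\mathbf{v}^{(ij)}\in\mathcal{C}(\mathcal{P}_j)$, and $\mathcal{N}_{<\infty}=\bigcup_r\mathcal{N}_{\le r}$. The real (CP) rank of a tensor is the minimal number of real rank-one tensors $\otimes_j\mathbf{v}^{(j)}$ summing to it. $\Vert\cdot\Vert_F$ is the Frobenius norm. *)

theory Defs
  imports Complex_Main "HOL-Library.FuncSet"
begin

text \<open>Tensors over index sets P 0, ..., P (k-1) are real functions on index tuples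
  x :: nat \<Rightarrow> 'a; only their values on the box PiE {..<k} P matter.\<close>

definition tbox :: "nat \<Rightarrow> (nat \<Rightarrow> 'a set) \<Rightarrow> (nat \<Rightarrow> 'a) set" where
  "tbox k P = PiE {..<k} P"

definition frob_dist2 :: "nat \<Rightarrow> (nat \<Rightarrow> 'a set) \<Rightarrow> ((nat \<Rightarrow> 'a) \<Rightarrow> real) \<Rightarrow> ((nat \<Rightarrow> 'a) \<Rightarrow> real) \<Rightarrow> real" where
  "frob_dist2 k P T S = (\<Sum>x\<in>tbox k P. (T x - S x)^2)"

definition rank_le :: "nat \<Rightarrow> (nat \<Rightarrow> 'a set) \<Rightarrow> nat \<Rightarrow> ((nat \<Rightarrow> 'a) \<Rightarrow> real) set" where
  "rank_le k P r = {S. \<exists>v :: nat \<Rightarrow> nat \<Rightarrow> 'a \<Rightarrow> real.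
      \<forall>x\<in>tbox k P. S x = (\<Sum>i<r. \<Prod>j<k. v i j (x j))}"

definition order_cone :: "'a set \<Rightarrow> 'a rel \<Rightarrow> ('a \<Rightarrow> real) set" where
  "order_cone A R = {f. (\<forall>x\<in>A. 0 \<le> f x) \<and> (\<forall>x\<in>A. \<forall>y\<in>A. (x, y) \<in> R \<longrightarrow> f x \<le> f y)}"

definition N_le :: "nat \<Rightarrow> (nat \<Rightarrow> 'a set) \<Rightarrow> (nat \<Rightarrow> 'a rel) \<Rightarrow> nat \<Rightarrow> ((nat \<Rightarrow> 'a) \<Rightarrow> real) set" where
  "N_le k P R r = {S. \<exists>v :: nat \<Rightarrow> nat \<Rightarrow> 'a \<Rightarrow> real.
      (\<forall>i<r. \<forall>j<k. v i j \<in> order_cone (P j) (R j)) \<and>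
      (\<forall>x\<in>tbox k P. S x = (\<Sum>i<r. \<Prod>j<k. v i j (x j)))}"

definition N_fin :: "nat \<Rightarrow> (nat \<Rightarrow> 'a set) \<Rightarrow> (nat \<Rightarrow> 'a rel) \<Rightarrow> ((nat \<Rightarrow> 'a) \<Rightarrow> real) set" where
  "N_fin k P R = (\<Union>r. N_le k P R r)"

definition is_minimizer :: "nat \<Rightarrow> (nat \<Rightarrow> 'a set) \<Rightarrow> ((nat \<Rightarrow> 'a) \<Rightarrow> real) \<Rightarrow> ((nat \<Rightarrow> 'a) \<Rightarrow> real) set \<Rightarrow> ((nat \<Rightarrow> 'a) \<Rightarrow> real) \<Rightarrow> bool" where
  "is_minimizer k P T M S \<longleftrightarrow> S \<in> M \<and> (\<forall>\<theta>\<in>M. frob_dist2 k P T S \<le> frob_dist2 k P T \<theta>)"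

end

theory Submission
  imports Defs
begin

lemma cone_comb:
  assumes "\<forall>i<r. u i \<in> order_cone A RA" "\<forall>i<r. (c i::real) \<ge> 0"
  shows "(\<lambda>a. \<Sum>i<r. c i * u i a) \<in> order_cone A RA"
  using assms unfolding order_cone_def
  by (auto intro!: sum_nonneg sum_mono mult_left_mono)

lemma cone_scale:
  assumes "f \<in> order_cone A RA" "(c::real) \<ge> 0"
  shows "(\<lambda>a. c * f a) \<in> order_cone A RA"
  using assms unfolding order_cone_def
  by (auto intro!: mult_left_mono)

lemma cone_zero: "(\<lambda>a. 0::real) \<in> order_cone A RA"
  unfolding order_cone_def by auto

lemma cone_nn: "f \<in> order_cone A R \<Longrightarrow> x \<in> A \<Longrightarrow> (0::real) \<le> f x"
  unfolding order_cone_def by blast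

lemma cone_mono: "f \<in> order_cone A R \<Longrightarrow> x \<in> A \<Longrightarrow> y \<in> A \<Longrightarrow> (x,y) \<in> R \<Longrightarrow> (f x::real) \<le> f y"
  unfolding order_cone_def by blast

lemma finite_min_rel:
  assumes "finite X" "X \<noteq> {}"
    and tot: "\<forall>x\<in>X. \<forall>y\<in>X. Q x y \<or> Q y x"
    and tr: "\<forall>x\<in>X. \<forall>y\<in>X. \<forall>z\<in>X. Q x y \<longrightarrow> Q y z \<longrightarrow> Q x z"
  shows "\<exists>a\<in>X. \<forall>g\<in>X. Q a g"
  using assms(1,2) tot tr
proof (induction X rule: finite_ne_induct)
  case (singleton x)
  then have "Q x x" by blast
  then show ?case by blast
next
  case (insert x F)
  have tot': "\<forall>x\<in>F. \<forall>y\<in>F. Q x y \<or> Q y x" using insert.prems(1) by blast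
  have tr': "\<forall>x\<in>F. \<forall>y\<in>F. \<forall>z\<in>F. Q x y \<longrightarrow> Q y z \<longrightarrow> Q x z" using insert.prems(2) by blast
  obtain a where a: "a\<in>F" "\<forall>g\<in>F. Q a g" using insert.IH[OF tot' tr'] by blast
  have xx: "Q x x" using insert.prems(1) by blast
  show ?case
  proof (cases "Q x a")
    case True
    have "\<forall>g\<in>F. Q x g"
    proof
      fix g assume g: "g \<in> F"
      have "x \<in> insert x F" "a \<in> insert x F" "g \<in> insert x F" using a g by auto
      then show "Q x g" using insert.prems(2) True a(2) g by blast
    qed
    then show ?thesis using xx by auto
  next
    case False
    moreover have "Q x a \<or> Q a x" using insert.prems(1) a(1) by blast
    ultimately have "Q a x" by blast
    then show ?thesis using a by auto
  qed
qed

definition cr :: "real \<times> real \<Rightarrow> real \<times> real \<Rightarrow> real" where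
  "cr g h = fst g * snd h - snd g * fst h"

lemma cr_ident:
  fixes s0 s1 :: real
  shows "(fst h * s0 + snd h * s1) * cr g k = (fst g * s0 + snd g * s1) * cr h k + (fst k * s0 + snd k * s1) * cr g h"
  unfolding cr_def by (simp add: algebra_simps)

lemma cr_trans:
  fixes s0 s1 :: real
  assumes "fst g * s0 + snd g * s1 > 0" "fst h * s0 + snd h * s1 > 0" "fst k * s0 + snd k * s1 > 0" "cr g h \<ge> 0" "cr h k \<ge> 0"
  shows "cr g k \<ge> 0"
proof -
  have "(fst h * s0 + snd h * s1) * cr g k \<ge> 0" using cr_ident[of h s0 s1 g k] assms by simp
  then show ?thesis using assms(2) by (simp add: zero_le_mult_iff)
qed

lemma cone_cong: "f \<in> order_cone A RA \<Longrightarrow> \<forall>a\<in>A. f a = g a \<Longrightarrow> g \<in> order_cone A RA"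
  unfolding order_cone_def by auto

lemma rank1_case:
  fixes M :: "'a \<Rightarrow> 'a \<Rightarrow> real"
  assumes col: "\<forall>b\<in>B. (\<lambda>a. M a b) \<in> order_cone A RA"
    and row: "\<forall>a\<in>A. (\<lambda>b. M a b) \<in> order_cone B RB"
    and r1: "\<forall>a\<in>A. \<forall>b\<in>B. M a b = p a * q b"
  shows "\<exists>f0 f1 g0 g1. f0 \<in> order_cone A RA \<and> f1 \<in> order_cone A RA \<and> g0 \<in> order_cone B RB
     \<and> g1 \<in> order_cone B RB \<and> (\<forall>a\<in>A. \<forall>b\<in>B. M a b = f0 a * g0 b + f1 a * g1 b)"
proof (cases "\<forall>a\<in>A. \<forall>b\<in>B. M a b = 0")
  case True
  show ?thesis
    apply (rule exI[of _ "\<lambda>a. 0"], rule exI[of _ "\<lambda>a. 0"], rule exI[of _ "\<lambda>b. 0"], rule exI[of _ "\<lambda>b. 0"])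
    using True cone_zero[of A RA] cone_zero[of B RB] by simp
next
  case False
  then obtain a0 b0 where ab: "a0 \<in> A" "b0 \<in> B" "M a0 b0 \<noteq> 0" by auto
  have "M a0 b0 \<ge> 0" using col ab unfolding order_cone_def by auto
  with ab have pos: "M a0 b0 > 0" by simp
  have f0: "(\<lambda>a. M a b0) \<in> order_cone A RA" using col ab by auto
  have g0: "(\<lambda>b. (1 / M a0 b0) * M a0 b) \<in> order_cone B RB"
    using cone_scale[OF row[rule_format, OF ab(1)], of "1 / M a0 b0"] pos by simp
  have eq: "M a b = M a b0 * ((1 / M a0 b0) * M a0 b) + 0 * 0" if "a \<in> A" "b \<in> B" for a b
  proof -
    have "M a b * M a0 b0 = M a b0 * M a0 b" using r1 that ab by simp
    then show ?thesis using pos by (simp add: field_simps)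
  qed
  show ?thesis
    apply (rule exI[of _ "\<lambda>a. M a b0"], rule exI[of _ "\<lambda>a. 0"], rule exI[of _ "\<lambda>b. (1 / M a0 b0) * M a0 b"], rule exI[of _ "\<lambda>b. 0"])
    by (intro conjI f0 g0 cone_zero ballI eq; assumption)
qed

lemma rank2_case:
  fixes M :: "'a \<Rightarrow> 'a \<Rightarrow> real" and p0 p1 q0 q1 :: "'a \<Rightarrow> real"
  assumes finA: "finite A" and finB: "finite B"
    and col: "\<forall>b\<in>B. (\<lambda>a. M a b) \<in> order_cone A RA"
    and row: "\<forall>a\<in>A. (\<lambda>b. M a b) \<in> order_cone B RB"
    and dif: "\<forall>b\<in>B. \<forall>b'\<in>B. (b,b') \<in> RB \<longrightarrow> (\<lambda>a. M a b' - M a b) \<in> order_cone A RA"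
    and r2: "\<forall>a\<in>A. \<forall>b\<in>B. M a b = p0 a * q0 b + p1 a * q1 b"
  shows "\<exists>f0 f1 g0 g1. f0 \<in> order_cone A RA \<and> f1 \<in> order_cone A RA \<and> g0 \<in> order_cone B RB
     \<and> g1 \<in> order_cone B RB \<and> (\<forall>a\<in>A. \<forall>b\<in>B. M a b = f0 a * g0 b + f1 a * g1 b)"
proof (cases "\<exists>n0 n1. (n0 \<noteq> 0 \<or> n1 \<noteq> 0) \<and> (\<forall>a\<in>A. n0 * p0 a + n1 * p1 a = (0::real))")
  case True
  then obtain n0 n1 :: real where n: "n0 \<noteq> 0 \<or> n1 \<noteq> 0" "\<forall>a\<in>A. n0 * p0 a + n1 * p1 a = 0" by blast
  show ?thesis
  proof (cases "n1 = 0")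
    case True
    then have "n0 \<noteq> 0" using n by simp
    then have "\<forall>a\<in>A. p0 a = 0" using n True by simp
    then have "\<forall>a\<in>A. \<forall>b\<in>B. M a b = p1 a * q1 b" using r2 by simp
    then show ?thesis by (rule rank1_case[OF col row])
  next
    case False
    have "\<forall>a\<in>A. p1 a = -(n0/n1) * p0 a"
    proof
      fix a assume "a \<in> A"
      then have "n0 * p0 a + n1 * p1 a = 0" using n(2) by auto
      then show "p1 a = -(n0/n1) * p0 a" using False by (simp add: field_simps)
    qed
    then have "\<forall>a\<in>A. \<forall>b\<in>B. M a b = p0 a * (q0 b - n0/n1 * q1 b)" using r2 by (simp add: algebra_simps)
    then show ?thesis by (rule rank1_case[OF col row])
  qed
next
  case False
  hence inj: "\<And>n0 n1. (\<forall>a\<in>A. n0 * p0 a + n1 * p1 a = 0) \<Longrightarrow> n0 = 0 \<and> n1 = 0" by blast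
  define z where "z b = (q0 b, q1 b)" for b
  define PP where "PP g a = fst g * p0 a + snd g * p1 a" for g a
  define D where "D = {(b,b'). b\<in>B \<and> b'\<in>B \<and> (b,b')\<in>RB}"
  define dz where "dz bb' = (q0 (snd bb') - q0 (fst bb'), q1 (snd bb') - q1 (fst bb'))" for bb'
  define G where "G = z ` B \<union> dz ` D"
  have finD: "finite D" unfolding D_def
    by (rule finite_subset[of _ "B \<times> B"]) (auto simp: finB)
  have finG: "finite G" unfolding G_def using finD finB by simp
  have PPz: "M a b = PP (z b) a" if "a \<in> A" "b \<in> B" for a b
    using r2 that unfolding PP_def z_def by (simp add: mult.commute)
  have PPd: "M a b' - M a b = PP (dz (b,b')) a" if "a \<in> A" "b \<in> B" "b' \<in> B" for a b b'
    using r2 that unfolding PP_def dz_def by (simp add: algebra_simps)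
  have Gc: "PP g \<in> order_cone A RA" if "g \<in> G" for g
  proof -
    { assume "g \<in> z ` B"
      then obtain b where b: "b \<in> B" "g = z b" by auto
      have ?thesis using cone_cong[OF col[rule_format, OF b(1)]] PPz b by auto }
    moreover
    { assume "g \<in> dz ` D"
      then obtain b b' where b: "b \<in> B" "b' \<in> B" "(b,b') \<in> RB" "g = dz (b,b')" unfolding D_def by auto
      have ?thesis using cone_cong[OF dif[rule_format, OF b(1,2,3)]] PPd b by auto }
    ultimately show ?thesis using that unfolding G_def by blast
  qed
  define s0 where "s0 = sum p0 A"
  define s1 where "s1 = sum p1 A"
  define l where "l g = fst g * s0 + snd g * s1" for g
  have lsum: "l g = (\<Sum>a\<in>A. PP g a)" for g
    unfolding l_def s0_def s1_def PP_def by (simp add: sum.distrib sum_distrib_left)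
  have PPnn: "g \<in> G \<Longrightarrow> a \<in> A \<Longrightarrow> PP g a \<ge> 0" for g a
    using Gc unfolding order_cone_def by blast
  have lnn: "l g \<ge> 0" if "g \<in> G" for g
  proof -
    have "(\<Sum>a\<in>A. PP g a) \<ge> 0" using PPnn[OF that] by (simp add: sum_nonneg)
    then show ?thesis using lsum[of g] by simp
  qed
  have lpos: "l g > 0" if "g \<in> G" "g \<noteq> (0,0)" for g
  proof (rule ccontr)
    assume "\<not> l g > 0"
    then have "l g = 0" using lnn[OF that(1)] by linarith
    then have "(\<Sum>a\<in>A. PP g a) = 0" using lsum[of g] by simp
    then have "\<forall>a\<in>A. PP g a = 0" using sum_nonneg_eq_0_iff[OF finA, of "PP g"] PPnn[OF that(1)] by simp
    then have "fst g = 0 \<and> snd g = 0" using inj[of "fst g" "snd g"] unfolding PP_def by simp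
    then show False using that(2) by (simp add: prod_eq_iff)
  qed
  have zG: "b \<in> B \<Longrightarrow> z b \<in> G" for b unfolding G_def by blast
  have dG: "b \<in> B \<Longrightarrow> b' \<in> B \<Longrightarrow> (b,b') \<in> RB \<Longrightarrow> dz (b,b') \<in> G" for b b'
    unfolding G_def D_def by blast
  define X where "X = G - {(0,0)}"
  show ?thesis
  proof (cases "X = {}")
    case True
    then have "\<forall>b\<in>B. z b = (0,0)" using zG unfolding X_def by blast
    then have M0: "\<forall>a\<in>A. \<forall>b\<in>B. M a b = 0" using PPz unfolding PP_def by simp
    show ?thesis
      apply (rule exI[of _ "\<lambda>a. 0"], rule exI[of _ "\<lambda>a. 0"], rule exI[of _ "\<lambda>b. 0"], rule exI[of _ "\<lambda>b. 0"])
      using M0 cone_zero[of A RA] cone_zero[of B RB] by simp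
  next
    case False
    have finX: "finite X" unfolding X_def using finG by simp
    have Xpos: "g \<in> X \<Longrightarrow> l g > 0" for g unfolding X_def using lpos by blast
    have crs: "cr h g = - cr g h" for g h unfolding cr_def by simp
    have "\<exists>a\<in>X. \<forall>g\<in>X. cr a g \<ge> 0"
    proof (rule finite_min_rel[OF finX False])
      show "\<forall>x\<in>X. \<forall>y\<in>X. 0 \<le> cr x y \<or> 0 \<le> cr y x" using crs by (metis neg_0_le_iff_le nle_le)
      show "\<forall>x\<in>X. \<forall>y\<in>X. \<forall>w\<in>X. 0 \<le> cr x y \<longrightarrow> 0 \<le> cr y w \<longrightarrow> 0 \<le> cr x w"
        using cr_trans[of _ s0 s1] Xpos unfolding l_def by blast
    qed
    then obtain aa where aa: "aa \<in> X" "\<forall>g\<in>X. cr aa g \<ge> 0" by blast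
    have "\<exists>a\<in>X. \<forall>g\<in>X. cr g a \<ge> 0"
    proof (rule finite_min_rel[OF finX False])
      show "\<forall>x\<in>X. \<forall>y\<in>X. 0 \<le> cr y x \<or> 0 \<le> cr x y" using crs by (metis neg_0_le_iff_le nle_le)
      show "\<forall>x\<in>X. \<forall>y\<in>X. \<forall>w\<in>X. 0 \<le> cr y x \<longrightarrow> 0 \<le> cr w y \<longrightarrow> 0 \<le> cr w x"
        using cr_trans[of _ s0 s1] Xpos unfolding l_def by blast
    qed
    then obtain bb where bb: "bb \<in> X" "\<forall>g\<in>X. cr g bb \<ge> 0" by blast
    have cr0: "cr (0,0) g = 0" "cr g (0,0) = 0" for g unfolding cr_def by simp_all
    have allG: "cr aa g \<ge> 0 \<and> cr g bb \<ge> 0" if "g \<in> G" for g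
    proof (cases "g = (0,0)")
      case True then show ?thesis using cr0 by simp
    next
      case False then have "g \<in> X" unfolding X_def using that by blast
      then show ?thesis using aa bb by blast
    qed
    have cA: "PP aa \<in> order_cone A RA" "PP bb \<in> order_cone A RA" using Gc aa(1) bb(1) unfolding X_def by auto
    have c0: "cr aa bb \<ge> 0" using aa bb(1) by blast
    have laa: "l aa > 0" and lbb: "l bb > 0" using Xpos aa(1) bb(1) by auto
    have crdiff: "cr (dz (b,b')) h = cr (z b') h - cr (z b) h" "cr h (dz (b,b')) = cr h (z b') - cr h (z b)" for b b' h
      unfolding cr_def dz_def z_def by (simp_all add: algebra_simps)
    show ?thesis
    proof (cases "cr aa bb = 0")
      case True
      have coll: "cr aa g = 0" if "g \<in> G" for g
      proof (cases "g = (0,0)")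
        case True then show ?thesis using cr0 by simp
      next
        case False
        have lg: "l g > 0" using lpos that False by blast
        have id: "l g * cr aa bb = l aa * cr g bb + l bb * cr aa g"
          using cr_ident[of g s0 s1 aa bb] unfolding l_def by simp
        have "l aa * cr g bb \<ge> 0" "l bb * cr aa g \<ge> 0" using laa lbb allG that by simp_all
        moreover have "l g * cr aa bb = 0" using True by simp
        ultimately have "l bb * cr aa g = 0" using id by linarith
        then show ?thesis using lbb by simp
      qed
      define g0 where "g0 b = l (z b) / l aa" for b
      have g0c: "g0 \<in> order_cone B RB"
        unfolding order_cone_def
      proof (intro CollectI conjI ballI impI)
        fix b assume "b \<in> B"
        then show "0 \<le> g0 b" unfolding g0_def using lnn zG laa by simp
      next
        fix b b' assume bb': "b \<in> B" "b' \<in> B" "(b,b') \<in> RB"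
        have "l (z b') - l (z b) = l (dz (b,b'))" unfolding l_def z_def dz_def by (simp add: algebra_simps)
        also have "\<dots> \<ge> 0" using lnn dG bb' by blast
        finally have "l (z b) \<le> l (z b')" by simp
        then show "g0 b \<le> g0 b'" unfolding g0_def using laa by (simp add: divide_right_mono)
      qed
      have eq: "M a b = PP aa a * g0 b + 0 * 0" if "a \<in> A" "b \<in> B" for a b
      proof -
        have cz: "cr aa (z b) = 0" using coll zG that(2) by blast
        have "PP (z b) a * l aa - l (z b) * PP aa a = cr aa (z b) * (s0 * p1 a - s1 * p0 a)"
          unfolding PP_def l_def cr_def by (simp add: algebra_simps)
        then have "PP (z b) a * l aa = l (z b) * PP aa a" using cz by simp
        then have "PP (z b) a = PP aa a * g0 b" unfolding g0_def using laa by (simp add: field_simps)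
        then show ?thesis using PPz that by simp
      qed
      show ?thesis
        apply (rule exI[of _ "PP aa"], rule exI[of _ "\<lambda>a. 0"], rule exI[of _ "g0"], rule exI[of _ "\<lambda>b. 0"])
        by (intro conjI cA g0c cone_zero ballI eq; assumption)
    next
      case False
      hence cpos: "cr aa bb > 0" using c0 by simp
      define g0 where "g0 b = cr (z b) bb / cr aa bb" for b
      define g1 where "g1 b = cr aa (z b) / cr aa bb" for b
      have g0c: "g0 \<in> order_cone B RB"
        unfolding order_cone_def
      proof (intro CollectI conjI ballI impI)
        fix b assume "b \<in> B"
        then show "0 \<le> g0 b" unfolding g0_def using allG zG cpos by simp
      next
        fix b b' assume bb': "b \<in> B" "b' \<in> B" "(b,b') \<in> RB"
        have "cr (dz (b,b')) bb \<ge> 0" using allG dG bb' by blast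
        then have "cr (z b) bb \<le> cr (z b') bb" using crdiff by simp
        then show "g0 b \<le> g0 b'" unfolding g0_def using cpos by (simp add: divide_right_mono)
      qed
      have g1c: "g1 \<in> order_cone B RB"
        unfolding order_cone_def
      proof (intro CollectI conjI ballI impI)
        fix b assume "b \<in> B"
        then show "0 \<le> g1 b" unfolding g1_def using allG zG cpos by simp
      next
        fix b b' assume bb': "b \<in> B" "b' \<in> B" "(b,b') \<in> RB"
        have "cr aa (dz (b,b')) \<ge> 0" using allG dG bb' by blast
        then have "cr aa (z b) \<le> cr aa (z b')" using crdiff by simp
        then show "g1 b \<le> g1 b'" unfolding g1_def using cpos by (simp add: divide_right_mono)
      qed
      have eq: "M a b = PP aa a * g0 b + PP bb a * g1 b" if "a \<in> A" "b \<in> B" for a b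
      proof -
        have "PP (z b) a * cr aa bb = PP aa a * cr (z b) bb + PP bb a * cr aa (z b)"
          unfolding PP_def cr_def by (simp add: algebra_simps)
        then have "PP (z b) a = PP aa a * g0 b + PP bb a * g1 b"
          unfolding g0_def g1_def using cpos by (simp add: field_simps)
        then show ?thesis using PPz that by simp
      qed
      show ?thesis
        apply (rule exI[of _ "PP aa"], rule exI[of _ "PP bb"], rule exI[of _ "g0"], rule exI[of _ "g1"])
        by (intro conjI cA g0c g1c ballI eq; assumption)
    qed
  qed
qed

lemma sum2: "(\<Sum>i<(2::nat). f i) = f 0 + (f 1 :: real)" by (simp add: numeral_2_eq_2)
lemma prod2: "(\<Prod>i<(2::nat). f i) = f 0 * (f 1 :: real)" by (simp add: numeral_2_eq_2)

lemma part2: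
  fixes P :: "nat \<Rightarrow> 'a set" and R :: "nat \<Rightarrow> 'a rel" and T2 :: "(nat \<Rightarrow> 'a) \<Rightarrow> real"
  assumes fin: "finite (P 0)" "finite (P 1)"
    and rk: "T2 \<in> rank_le 2 P 2" and nf: "T2 \<in> N_fin 2 P R"
  shows "T2 \<in> N_le 2 P R 2"
proof -
  define pt where "pt a b = (\<lambda>j::nat. if j = 0 then a else if j = 1 then b else undefined)" for a b :: 'a
  have ptbox: "pt a b \<in> tbox 2 P" if "a \<in> P 0" "b \<in> P 1" for a b
    unfolding tbox_def pt_def PiE_def extensional_def using that by (auto simp: less_2_cases_iff)
  have pt01: "pt a b 0 = a" "pt a b 1 = b" for a b unfolding pt_def by simp_all
  have xpt: "x = pt (x 0) (x 1)" "x 0 \<in> P 0" "x 1 \<in> P 1" if "x \<in> tbox 2 P" for x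
  proof -
    show "x 0 \<in> P 0" "x 1 \<in> P 1" using that unfolding tbox_def by (auto simp: PiE_iff)
    show "x = pt (x 0) (x 1)"
    proof
      fix j show "x j = pt (x 0) (x 1) j"
      proof (cases "j < 2")
        case True then show ?thesis unfolding pt_def using less_2_cases by auto
      next
        case False
        then have "x j = undefined" using that unfolding tbox_def by (auto intro: PiE_arb)
        then show ?thesis unfolding pt_def using False by auto
      qed
    qed
  qed
  define M where "M a b = T2 (pt a b)" for a b
  obtain v :: "nat \<Rightarrow> nat \<Rightarrow> 'a \<Rightarrow> real" where v: "\<forall>x\<in>tbox 2 P. T2 x = (\<Sum>i<2. \<Prod>j<2. v i j (x j))"
    using rk unfolding rank_le_def by blast
  have r2: "\<forall>a\<in>P 0. \<forall>b\<in>P 1. M a b = v 0 0 a * v 0 1 b + v 1 0 a * v 1 1 b"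
    using v ptbox pt01 unfolding M_def by (simp add: sum2 prod2)
  obtain r :: nat and w :: "nat \<Rightarrow> nat \<Rightarrow> 'a \<Rightarrow> real" where w: "\<forall>i<r. \<forall>j<2. w i j \<in> order_cone (P j) (R j)"
    "\<forall>x\<in>tbox 2 P. T2 x = (\<Sum>i<r. \<Prod>j<2. w i j (x j))"
    using nf unfolding N_fin_def N_le_def by blast
  have w0: "\<forall>i<r. w i 0 \<in> order_cone (P 0) (R 0)" and w1: "\<forall>i<r. w i 1 \<in> order_cone (P 1) (R 1)"
    using w(1) by auto
  have Mw: "M a b = (\<Sum>i<r. w i 0 a * w i 1 b)" if "a \<in> P 0" "b \<in> P 1" for a b
  proof -
    have "T2 (pt a b) = (\<Sum>i<r. \<Prod>j<2. w i j (pt a b j))" using w(2) ptbox[OF that] by blast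
    then show ?thesis unfolding M_def by (simp add: prod2 pt_def)
  qed
  have col: "\<forall>b\<in>P 1. (\<lambda>a. M a b) \<in> order_cone (P 0) (R 0)"
  proof
    fix b assume b: "b \<in> P 1"
    have "\<forall>i<r. w i 1 b \<ge> 0"
    proof (intro allI impI)
      fix i assume i: "i < r"
      show "w i 1 b \<ge> 0" using cone_nn[OF w1[rule_format, OF i] b] .
    qed
    then have "(\<lambda>a. \<Sum>i<r. w i 1 b * w i 0 a) \<in> order_cone (P 0) (R 0)"
      by (rule cone_comb[OF w0])
    then show "(\<lambda>a. M a b) \<in> order_cone (P 0) (R 0)"
      by (rule cone_cong) (simp add: Mw[OF _ b] mult.commute)
  qed
  have row: "\<forall>a\<in>P 0. (\<lambda>b. M a b) \<in> order_cone (P 1) (R 1)"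
  proof
    fix a assume a: "a \<in> P 0"
    have "\<forall>i<r. w i 0 a \<ge> 0"
    proof (intro allI impI)
      fix i assume i: "i < r"
      show "w i 0 a \<ge> 0" using cone_nn[OF w0[rule_format, OF i] a] .
    qed
    then have "(\<lambda>b. \<Sum>i<r. w i 0 a * w i 1 b) \<in> order_cone (P 1) (R 1)"
      by (rule cone_comb[OF w1])
    then show "(\<lambda>b. M a b) \<in> order_cone (P 1) (R 1)"
      by (rule cone_cong) (simp add: Mw[OF a])
  qed
  have dif: "\<forall>b\<in>P 1. \<forall>b'\<in>P 1. (b,b') \<in> R 1 \<longrightarrow> (\<lambda>a. M a b' - M a b) \<in> order_cone (P 0) (R 0)"
  proof (intro ballI impI)
    fix b b' assume b: "b \<in> P 1" "b' \<in> P 1" "(b,b') \<in> R 1"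
    have "\<forall>i<r. w i 1 b' - w i 1 b \<ge> 0"
    proof (intro allI impI)
      fix i assume i: "i < r"
      have "w i 1 b \<le> w i 1 b'" using cone_mono[OF w1[rule_format, OF i] b(1,2,3)] .
      then show "w i 1 b' - w i 1 b \<ge> 0" by simp
    qed
    then have cd: "(\<lambda>a. \<Sum>i<r. (w i 1 b' - w i 1 b) * w i 0 a) \<in> order_cone (P 0) (R 0)"
      by (rule cone_comb[OF w0])
    have eqd: "M a b' - M a b = (\<Sum>i<r. (w i 1 b' - w i 1 b) * w i 0 a)" if a: "a \<in> P 0" for a
    proof -
      have "M a b' - M a b = (\<Sum>i<r. w i 0 a * w i 1 b') - (\<Sum>i<r. w i 0 a * w i 1 b)"
        using Mw a b by simp
      also have "\<dots> = (\<Sum>i<r. w i 0 a * w i 1 b' - w i 0 a * w i 1 b)"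
        by (rule sum_subtractf[symmetric])
      also have "\<dots> = (\<Sum>i<r. (w i 1 b' - w i 1 b) * w i 0 a)"
        by (rule sum.cong) (simp_all add: algebra_simps)
      finally show ?thesis .
    qed
    show "(\<lambda>a. M a b' - M a b) \<in> order_cone (P 0) (R 0)"
      by (rule cone_cong[OF cd]) (simp add: eqd)
  qed
  obtain f0 f1 g0 g1 where fg: "f0 \<in> order_cone (P 0) (R 0)" "f1 \<in> order_cone (P 0) (R 0)"
    "g0 \<in> order_cone (P 1) (R 1)" "g1 \<in> order_cone (P 1) (R 1)"
    "\<forall>a\<in>P 0. \<forall>b\<in>P 1. M a b = f0 a * g0 b + f1 a * g1 b"
    using rank2_case[OF fin col row dif r2] by blast
  define V where "V i j = (if i = (0::nat) then (if j = (0::nat) then f0 else g0) else (if j = 0 then f1 else g1))" for i j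
  have Vc: "\<forall>i<2. \<forall>j<2. V i j \<in> order_cone (P j) (R j)"
    unfolding V_def using fg less_2_cases by auto
  have Ve: "\<forall>x\<in>tbox 2 P. T2 x = (\<Sum>i<2. \<Prod>j<2. V i j (x j))"
  proof
    fix x assume x: "x \<in> tbox 2 P"
    have "T2 x = M (x 0) (x 1)" unfolding M_def using xpt(1)[OF x] by simp
    also have "\<dots> = f0 (x 0) * g0 (x 1) + f1 (x 0) * g1 (x 1)" using fg(5) xpt(2,3)[OF x] by blast
    also have "\<dots> = (\<Sum>i<2. \<Prod>j<2. V i j (x j))" unfolding V_def by (simp add: sum2 prod2)
    finally show "T2 x = (\<Sum>i<2. \<Prod>j<2. V i j (x j))" .
  qed
  show ?thesis unfolding N_le_def using Vc Ve by blast
qed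

theorem lemma11:
  fixes k :: nat and P :: "nat \<Rightarrow> 'a set" and R :: "nat \<Rightarrow> 'a rel"
    and T :: "(nat \<Rightarrow> 'a) \<Rightarrow> real"
  assumes "\<forall>j<k. finite (P j)"
    and "\<forall>j<k. partial_order_on (P j) (R j)"
  shows "(\<forall>r Tr. is_minimizer k P T (rank_le k P r) Tr \<and> Tr \<in> N_le k P R r
              \<longrightarrow> is_minimizer k P T (N_le k P R r) Tr)
       \<and> (k = 2 \<longrightarrow> (\<forall>T2. is_minimizer k P T (rank_le k P 2) T2 \<and> T2 \<in> N_fin k P R
              \<longrightarrow> is_minimizer k P T (N_le k P R 2) T2))"
proof -
  have sub: "N_le k P R r \<subseteq> rank_le k P r" for r unfolding N_le_def rank_le_def by blast
  have p1: "is_minimizer k P T (N_le k P R r) Tr"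
    if "is_minimizer k P T (rank_le k P r) Tr" "Tr \<in> N_le k P R r" for r Tr
    using that sub[of r] unfolding is_minimizer_def by blast
  have p2: "is_minimizer k P T (N_le k P R 2) T2"
    if k2: "k = 2" and h: "is_minimizer k P T (rank_le k P 2) T2" "T2 \<in> N_fin k P R" for T2
  proof -
    have "finite (P 0)" "finite (P 1)" using assms(1) k2 by auto
    moreover have "T2 \<in> rank_le 2 P 2" using h(1) k2 unfolding is_minimizer_def by simp
    moreover have "T2 \<in> N_fin 2 P R" using h(2) k2 by simp
    ultimately have "T2 \<in> N_le k P R 2" using part2 k2 by blast
    then show ?thesis using p1 h(1) by blast
  qed
  show ?thesis using p1 p2 by blast
qed

end
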